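(* Let $\gamma>0$, let $E_1,E_2,\dots$ be i.i.d. unit exponential random variables, and for $0<\tau<1/2$ let $f_\tau(j)=j^\tau$ for $j\ge 0$ (so $f_\tau(0)=0$). Define $$W_k(f_\tau)=\sum_{j=1}^{k}\big(f_\tau(j)-f_\tau(j-1)\big)\left(\exp\Big(-\gamma\sum_{h=j}^{k}E_h/h\Big)-\mathbb{E}\exp\Big(-\gamma\sum_{h=j}^{k}E_h/h\Big)\right).$$ Then $W_k(f_\tau)$ converges almost surely, as $k\to\infty$, to a finite random variable $W_\infty(\tau)$. *)

theory Defs
  imports "HOL-Probability.Probability"
begin

(* f_tau(j) = j^tau, with f_tau(0) = 0 (note 0 powr tau = 0 in Isabelle) *)
definition f_tau :: "real \<Rightarrow> nat \<Rightarrow> real" where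
  "f_tau \<tau> j = real j powr \<tau>"

definition S_jk :: "(nat \<Rightarrow> 'a \<Rightarrow> real) \<Rightarrow> nat \<Rightarrow> nat \<Rightarrow> 'a \<Rightarrow> real" where
  "S_jk E j k \<omega> = (\<Sum>h=j..k. E h \<omega> / real h)"

definition W_k :: "'a measure \<Rightarrow> (nat \<Rightarrow> 'a \<Rightarrow> real) \<Rightarrow> real \<Rightarrow> real \<Rightarrow> nat \<Rightarrow> 'a \<Rightarrow> real" where
  "W_k M E \<gamma> \<tau> k \<omega> =
     (\<Sum>j=1..k. (f_tau \<tau> j - f_tau \<tau> (j - 1)) *
        (exp (- \<gamma> * S_jk E j k \<omega>)
         - integral\<^sup>L M (\<lambda>\<eta>. exp (- \<gamma> * S_jk E j k \<eta>))))"

end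

theory Submission
  imports Defs
begin

locale cset = prob_space M for M :: "'a measure" +
  fixes E :: "nat \<Rightarrow> 'a \<Rightarrow> real" and \<gamma> \<tau> :: real
  assumes gpos: "\<gamma> > 0" and tpos: "0 < \<tau>" and thalf: "\<tau> < 1/2"
    and distr: "\<And>h. h \<ge> 1 \<Longrightarrow> distributed M lborel (E h) (\<lambda>x. ennreal (exponential_density 1 x))"
    and indep: "indep_vars (\<lambda>_. borel) E {1..}"
begin

lemma E_meas[measurable]: "h \<ge> 1 \<Longrightarrow> E h \<in> borel_measurable M"
  using distributed_measurable[OF distr] by auto

lemma E_mom: "h \<ge> 1 \<Longrightarrow> integrable M (\<lambda>x. E h x ^ i) \<and> expectation (\<lambda>x. E h x ^ i) = fact i"
  using erlang_ith_moment_integrable[of 1 "E h" 0 i] erlang_ith_moment[of 1 "E h" 0 i] distr[of h]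
  by simp

definition X :: "nat \<Rightarrow> 'a \<Rightarrow> real" where "X h \<omega> = (E h \<omega> - 1) / real h"

lemma X_meas[measurable]: "h \<ge> 1 \<Longrightarrow> X h \<in> borel_measurable M"
  unfolding X_def by measurable

lemma X_int: "h \<ge> 1 \<Longrightarrow> integrable M (X h)"
proof -
  assume h: "h \<ge> 1"
  have "integrable M (\<lambda>x. E h x ^ 1)" using E_mom[OF h] by blast
  then show ?thesis unfolding X_def by (auto intro!: integrable_divide)
qed

lemma X_exp: "h \<ge> 1 \<Longrightarrow> expectation (X h) = 0"
proof -
  assume h: "h \<ge> 1"
  have i: "integrable M (\<lambda>x. E h x ^ 1)" "expectation (\<lambda>x. E h x ^ 1) = 1" using E_mom[OF h, of 1] by auto
  have "expectation (X h) = (expectation (\<lambda>x. E h x) - 1) / real h"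
    unfolding X_def using i by (simp add: prob_space)
  then show ?thesis using i by simp
qed

lemma indep_X: "indep_vars (\<lambda>_. borel) X {1..}"
proof -
  have "indep_vars (\<lambda>_. borel) (\<lambda>h x. (\<lambda>y. (y - 1) / real h) (E h x)) {1..}"
    by (rule indep_vars_compose2[OF indep]) auto
  then show ?thesis unfolding X_def by simp
qed

lemma XX_int: "h \<ge> 1 \<Longrightarrow> i \<ge> 1 \<Longrightarrow> integrable M (\<lambda>\<omega>. X h \<omega> * X i \<omega>)"
  and XX_exp: "h \<ge> 1 \<Longrightarrow> i \<ge> 1 \<Longrightarrow> expectation (\<lambda>\<omega>. X h \<omega> * X i \<omega>) = (if h = i then 1 / (real h)^2 else 0)"
proof -
  assume h: "h \<ge> 1" and i: "i \<ge> 1"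
  have "integrable M (\<lambda>\<omega>. X h \<omega> * X i \<omega>) \<and> expectation (\<lambda>\<omega>. X h \<omega> * X i \<omega>) = (if h = i then 1 / (real h)^2 else 0)"
  proof (cases "h = i")
    case True
    have m1: "integrable M (\<lambda>x. E h x ^ 1)" "expectation (\<lambda>x. E h x ^ 1) = 1" using E_mom[OF h, of 1] by auto
    have m2: "integrable M (\<lambda>x. E h x ^ 2)" "expectation (\<lambda>x. E h x ^ 2) = 2" using E_mom[OF h, of 2] by auto
    have eq: "(\<lambda>\<omega>. X h \<omega> * X i \<omega>) = (\<lambda>\<omega>. (E h \<omega> ^ 2 - 2 * E h \<omega> ^ 1 + 1) / (real h)^2)"
      using True by (auto simp: X_def fun_eq_iff field_simps power2_eq_square)
    have "integrable M (\<lambda>\<omega>. (E h \<omega> ^ 2 - 2 * E h \<omega> ^ 1 + 1) / (real h)^2)"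
      using m1 m2 by (intro integrable_divide Bochner_Integration.integrable_add Bochner_Integration.integrable_diff integrable_mult_right) auto
    moreover have "expectation (\<lambda>\<omega>. (E h \<omega> ^ 2 - 2 * E h \<omega> ^ 1 + 1) / (real h)^2) = 1 / (real h)^2"
      using m1 m2 by (simp add: prob_space)
    ultimately show ?thesis using eq True by simp
  next
    case False
    have ind: "indep_vars (\<lambda>_. borel) X {h, i}"
      by (rule indep_vars_subset[OF indep_X]) (use h i in auto)
    have "integrable M (\<lambda>\<omega>. \<Prod>j\<in>{h,i}. X j \<omega>)" "expectation (\<lambda>\<omega>. \<Prod>j\<in>{h,i}. X j \<omega>) = (\<Prod>j\<in>{h,i}. expectation (X j))"
      using indep_vars_integrable[OF _ ind] indep_vars_lebesgue_integral[OF _ ind] X_int h i by auto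
    then show ?thesis using False X_exp[OF h] by simp
  qed
  then show "integrable M (\<lambda>\<omega>. X h \<omega> * X i \<omega>)" "expectation (\<lambda>\<omega>. X h \<omega> * X i \<omega>) = (if h = i then 1 / (real h)^2 else 0)" by auto
qed

end

lemma sq_split:
  fixes x y t :: real assumes t: "t > 0"
  shows "(x + y)^2 \<le> (1 + t) * x^2 + (1 + 1/t) * y^2"
proof -
  have "0 \<le> (t*x - y)^2 / t" using t by simp
  also have "(t*x - y)^2 / t = t * x^2 - 2*x*y + y^2/t" using t
    by (simp add: power2_eq_square field_simps)
  finally have "2*x*y \<le> t * x^2 + y^2/t" by simp
  then show ?thesis by (simp add: power2_eq_square field_simps)
qed

definition Bs :: "(nat \<Rightarrow> real) \<Rightarrow> nat \<Rightarrow> nat \<Rightarrow> real" where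
  "Bs x a n = (\<Sum>h\<in>{a..<a+n}. x h)"

fun Rs :: "(nat \<Rightarrow> real) \<Rightarrow> nat \<Rightarrow> nat \<Rightarrow> real" where
  "Rs x 0 a = (x a)^2"
| "Rs x (Suc k) a = Rs x k a + Rs x k (a + 2^k) + (Bs x a (2^k))^2"

lemma Rs_nonneg: "Rs x k a \<ge> 0"
  by (induction k arbitrary: a) auto

lemma Bs_split: "Bs x a (n + n') = Bs x a n + Bs x (a + n) n'"
  unfolding Bs_def
  by (metis add.assoc le_add1 sum.atLeastLessThan_concat)

lemma chain_path: "m \<le> 2^k \<Longrightarrow> (Bs x a m)^2 \<le> real (k+1) * Rs x k a"
proof (induction k arbitrary: a m)
  case 0
  then have "m = 0 \<or> m = 1" by auto
  then show ?case by (auto simp: Bs_def)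
next
  case (Suc k)
  show ?case
  proof (cases "m \<le> 2^k")
    case True
    have "(Bs x a m)^2 \<le> real (k+1) * Rs x k a" using Suc.IH[OF True] .
    also have "\<dots> \<le> real (Suc k + 1) * Rs x (Suc k) a"
      using Rs_nonneg[of x k a] Rs_nonneg[of x k "a+2^k"]
      by (intro mult_mono) auto
    finally show ?thesis .
  next
    case False
    define m' where "m' = m - 2^k"
    have m: "m = 2^k + m'" and m': "m' \<le> 2^k" using False Suc.prems by (auto simp: m'_def)
    have "Bs x a m = Bs x a (2^k) + Bs x (a + 2^k) m'" using m Bs_split by simp
    then have "(Bs x a m)^2 \<le> (1 + real (k+1)) * (Bs x a (2^k))^2 + (1 + 1 / real (k+1)) * (Bs x (a + 2^k) m')^2"
      using sq_split[of "real (k+1)"] by simp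
    also have "(1 + 1 / real (k+1)) * (Bs x (a + 2^k) m')^2 \<le> (1 + 1 / real (k+1)) * (real (k+1) * Rs x k (a + 2^k))"
      using Suc.IH[OF m'] by (intro mult_left_mono) auto
    also have "(1 + 1 / real (k+1)) * (real (k+1) * Rs x k (a + 2^k)) = real (Suc k + 1) * Rs x k (a + 2^k)"
      by (simp add: field_simps)
    finally have "(Bs x a m)^2 \<le> real (Suc k + 1) * ((Bs x a (2^k))^2 + Rs x k (a + 2^k))"
      by (simp add: algebra_simps)
    also have "\<dots> \<le> real (Suc k + 1) * Rs x (Suc k) a"
      using Rs_nonneg[of x k a] by (intro mult_left_mono) auto
    finally show ?thesis .
  qed
qed

context cset begin

definition V :: "nat \<Rightarrow> nat \<Rightarrow> real" where "V a n = (\<Sum>h\<in>{a..<a+n}. 1 / (real h)^2)"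

lemma V_split: "V a (n + n') = V a n + V (a + n) n'"
  using Bs_split[of "\<lambda>h. 1 / (real h)^2" a n n'] unfolding V_def Bs_def .

lemma V_nonneg: "V a n \<ge> 0" unfolding V_def by (auto intro: sum_nonneg)

lemma B_meas: "a \<ge> 1 \<Longrightarrow> (\<lambda>\<omega>. Bs (\<lambda>h. X h \<omega>) a n) \<in> borel_measurable M"
  unfolding Bs_def by (intro borel_measurable_sum) auto

lemma B2: "a \<ge> 1 \<Longrightarrow> integrable M (\<lambda>\<omega>. (Bs (\<lambda>h. X h \<omega>) a n)^2) \<and>
   expectation (\<lambda>\<omega>. (Bs (\<lambda>h. X h \<omega>) a n)^2) = V a n"
proof -
  assume a: "a \<ge> 1"
  let ?I = "{a..<a+n}"
  have eq: "(\<lambda>\<omega>. (Bs (\<lambda>h. X h \<omega>) a n)^2) = (\<lambda>\<omega>. \<Sum>i\<in>?I. \<Sum>j\<in>?I. X i \<omega> * X j \<omega>)"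
    by (auto simp: Bs_def power2_eq_square sum_product fun_eq_iff)
  have int: "integrable M (\<lambda>\<omega>. \<Sum>i\<in>?I. \<Sum>j\<in>?I. X i \<omega> * X j \<omega>)"
    using a by (intro Bochner_Integration.integrable_sum XX_int) auto
  have "expectation (\<lambda>\<omega>. \<Sum>i\<in>?I. \<Sum>j\<in>?I. X i \<omega> * X j \<omega>) = (\<Sum>i\<in>?I. \<Sum>j\<in>?I. expectation (\<lambda>\<omega>. X i \<omega> * X j \<omega>))"
  proof -
    have "expectation (\<lambda>\<omega>. \<Sum>i\<in>?I. \<Sum>j\<in>?I. X i \<omega> * X j \<omega>) = (\<Sum>i\<in>?I. expectation (\<lambda>\<omega>. \<Sum>j\<in>?I. X i \<omega> * X j \<omega>))"
      using a by (subst Bochner_Integration.integral_sum) (auto intro!: Bochner_Integration.integrable_sum XX_int)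
    also have "\<dots> = (\<Sum>i\<in>?I. \<Sum>j\<in>?I. expectation (\<lambda>\<omega>. X i \<omega> * X j \<omega>))"
      using a by (intro sum.cong refl, subst Bochner_Integration.integral_sum) (auto intro!: XX_int)
    finally show ?thesis .
  qed
  also have "\<dots> = (\<Sum>i\<in>?I. \<Sum>j\<in>?I. (if i = j then 1 / (real i)^2 else 0))"
    using a by (intro sum.cong refl) (auto simp: XX_exp)
  also have "\<dots> = V a n" unfolding V_def by (simp add: if_distrib sum.delta)
  finally show ?thesis using eq int by simp
qed

lemma R_meas: "a \<ge> 1 \<Longrightarrow> (\<lambda>\<omega>. Rs (\<lambda>h. X h \<omega>) k a) \<in> borel_measurable M"
proof (induction k arbitrary: a)
  case 0
  then show ?case using X_meas[OF 0] by (simp add: borel_measurable_power)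
next
  case (Suc k)
  have a2: "a + 2^k \<ge> 1" using Suc.prems by simp
  show ?case using Suc.IH[OF Suc.prems] Suc.IH[OF a2] B_meas[OF Suc.prems, of "2^k"]
    by (simp del: Rs.simps add: Rs.simps(2) borel_measurable_add borel_measurable_power)
qed

lemma R_exp: "a \<ge> 1 \<Longrightarrow> integrable M (\<lambda>\<omega>. Rs (\<lambda>h. X h \<omega>) k a) \<and>
   expectation (\<lambda>\<omega>. Rs (\<lambda>h. X h \<omega>) k a) \<le> real (k+1) * V a (2^k)"
proof (induction k arbitrary: a)
  case 0
  have "integrable M (\<lambda>\<omega>. X a \<omega> * X a \<omega>)" "expectation (\<lambda>\<omega>. X a \<omega> * X a \<omega>) = 1 / (real a)^2"
    using XX_int[OF 0 0] XX_exp[OF 0 0] by auto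
  moreover have "V a (2^0) = 1 / (real a)^2" by (simp add: V_def)
  ultimately show ?case by (simp add: power2_eq_square)
next
  case (Suc k)
  have a2: "a + 2^k \<ge> 1" using Suc.prems by simp
  note I1 = Suc.IH[OF Suc.prems] and I2 = Suc.IH[OF a2] and B = B2[OF Suc.prems, of "2^k"]
  have eqR: "(\<lambda>\<omega>. Rs (\<lambda>h. X h \<omega>) (Suc k) a) = (\<lambda>\<omega>. Rs (\<lambda>h. X h \<omega>) k a + Rs (\<lambda>h. X h \<omega>) k (a + 2^k) + (Bs (\<lambda>h. X h \<omega>) a (2^k))^2)"
    by simp
  have int: "integrable M (\<lambda>\<omega>. Rs (\<lambda>h. X h \<omega>) (Suc k) a)"
    unfolding eqR using I1 I2 B by (intro Bochner_Integration.integrable_add) auto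
  have "expectation (\<lambda>\<omega>. Rs (\<lambda>h. X h \<omega>) (Suc k) a) =
     expectation (\<lambda>\<omega>. Rs (\<lambda>h. X h \<omega>) k a) + expectation (\<lambda>\<omega>. Rs (\<lambda>h. X h \<omega>) k (a+2^k)) + V a (2^k)"
  proof -
    have i1: "integrable M (\<lambda>\<omega>. Rs (\<lambda>h. X h \<omega>) k a + Rs (\<lambda>h. X h \<omega>) k (a + 2^k))"
      using I1 I2 by (intro Bochner_Integration.integrable_add) auto
    show ?thesis unfolding eqR
      using Bochner_Integration.integral_add[OF i1 conjunct1[OF B]]
        Bochner_Integration.integral_add[OF conjunct1[OF I1] conjunct1[OF I2]] conjunct2[OF B] by simp
  qed
  also have "\<dots> \<le> real (k+1) * V a (2^k) + real (k+1) * V (a+2^k) (2^k) + V a (2^k)"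
    using I1 I2 by linarith
  also have "\<dots> \<le> real (Suc k + 1) * V a (2^Suc k)"
  proof -
    have e: "(2::nat)^Suc k = 2^k + 2^k" by simp
    have "V a (2^Suc k) = V a (2^k) + V (a+2^k) (2^k)" unfolding e by (rule V_split)
    then have "real (Suc k + 1) * V a (2^Suc k) = real (k+1) * V a (2^k) + real (k+1) * V (a+2^k) (2^k) + V a (2^k) + V (a+2^k) (2^k)"
      by (simp add: distrib_left distrib_right)
    then show ?thesis using V_nonneg[of "a+2^k" "2^k"] by linarith
  qed
  finally show ?case using int by simp
qed

end

lemma ratio_summable:
  fixes r :: real assumes r: "0 < r" "r < 1"
  shows "summable (\<lambda>k. (real k + 1)^2 * r^k)"
proof -
  define c where "c = (1 + r) / 2"
  define d where "d = (1 - r) / 2"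
  have c: "c < 1" and d: "d > 0" using r by (auto simp: c_def d_def)
  have cd: "c = r + d" by (simp add: c_def d_def field_simps)
  define N where "N = nat \<lceil>3 * r / d\<rceil>"
  show ?thesis
  proof (rule summable_ratio_test[OF c, of N])
    fix k assume k: "N \<le> k"
    have "3 * r / d \<le> real k" using k unfolding N_def by linarith
    then have "3 * r \<le> real k * d" using d by (simp add: field_simps)
    then have h1: "3 * r \<le> (real k + 1) * d" using d by (simp add: algebra_simps)
    have "3 * r * (real k + 1) \<le> (real k + 1) * d * (real k + 1)"
      by (rule mult_right_mono[OF h1]) auto
    moreover have "0 \<le> r * real k" using r by simp
    ultimately have h2: "r * (real k + 2)^2 \<le> c * (real k + 1)^2"
      unfolding cd by (simp add: power2_eq_square algebra_simps)
    have "(real (Suc k) + 1)^2 * r^Suc k = (r * (real k + 2)^2) * r^k"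
      by (simp add: algebra_simps)
    also have "\<dots> \<le> (c * (real k + 1)^2) * r^k"
      by (rule mult_right_mono[OF h2]) (use r in auto)
    finally show "norm ((real (Suc k) + 1)^2 * r^Suc k) \<le> c * norm ((real k + 1)^2 * r^k)"
      using r by (simp add: abs_mult mult.assoc)
  qed
qed

context cset begin

definition \<sigma> :: real where "\<sigma> = (2 * \<tau> + 1) / 4"
definition q :: real where "q = 2 powr (- \<sigma>)"

lemma \<sigma>_bounds: "\<tau> < \<sigma>" "\<sigma> < 1/2" "0 < \<sigma>"
  using tpos thalf unfolding \<sigma>_def by auto

lemma q_bounds: "0 < q" "q < 1"
  using \<sigma>_bounds unfolding q_def by (auto simp: powr_less_one)

lemma V_dyad: "V (2^k) (2^k) \<le> 1 / 2^k"
proof -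
  have "V (2^k) (2^k) \<le> (\<Sum>h\<in>{2^k..<2^k+2^k::nat}. 1 / (2^k)^2)"
    unfolding V_def
  proof (intro sum_mono)
    fix h :: nat assume h: "h \<in> {2^k..<2^k+2^k}"
    have "0 < h" using h by (metis atLeastLessThan_iff less_le_trans pos2 zero_less_power)
    from h have "(2::real)^k \<le> real h" by (simp add: numeral_power_le_of_nat_cancel_iff)
    moreover have "(0::real) < 2^k" by simp
    ultimately show "1 / (real h)^2 \<le> 1 / (2^k)^2"
      using \<open>0 < h\<close> by (intro divide_left_mono power_mono mult_pos_pos) auto
  qed
  also have "\<dots> = 1 / 2^k" by (simp add: power2_eq_square)
  finally show ?thesis .
qed

lemma BC: "AE \<omega> in M. eventually (\<lambda>k. real (k+1) * Rs (\<lambda>h. X h \<omega>) k (2^k) < (q^2)^k) sequentially"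
proof -
  define A where "A k = {\<omega>\<in>space M. (q^2)^k \<le> real (k+1) * Rs (\<lambda>h. X h \<omega>) k (2^k)}" for k
  define r where "r = 1 / (2 * q^2)"
  have r: "0 < r" "r < 1"
  proof -
    show "0 < r" using q_bounds by (simp add: r_def)
    have "q^2 = 2 powr (-\<sigma>) * 2 powr (-\<sigma>)" unfolding q_def by (simp add: power2_eq_square)
    also have "\<dots> = 2 powr (-2*\<sigma>)" by (simp add: powr_add[symmetric])
    finally have "2 * q^2 = 2 powr 1 * 2 powr (-2*\<sigma>)" by simp
    also have "\<dots> = 2 powr (1 + (-2*\<sigma>))" by (rule powr_add[symmetric])
    also have "\<dots> = 2 powr (1 - 2*\<sigma>)" by simp
    finally have "2 * q^2 = 2 powr (1 - 2*\<sigma>)" .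
    moreover have "2 powr (1 - 2*\<sigma>) > 1" using \<sigma>_bounds by simp
    ultimately show "r < 1" unfolding r_def by simp
  qed
  have meas: "A k \<in> sets M" for k
  proof -
    have "(\<lambda>\<omega>. real (k+1) * Rs (\<lambda>h. X h \<omega>) k (2^k)) \<in> borel_measurable M"
      using R_meas[of "2^k" k] by simp
    then show ?thesis unfolding A_def by measurable
  qed
  have bound: "measure M (A k) \<le> (real k + 1)^2 * r^k" for k
  proof -
    have a: "(2::nat)^k \<ge> 1" by simp
    note RE = R_exp[OF a, of k]
    have "measure M (A k) \<le> expectation (\<lambda>\<omega>. real (k+1) * Rs (\<lambda>h. X h \<omega>) k (2^k)) / (q^2)^k"
      unfolding A_def
      using RE q_bounds Rs_nonneg by (intro integral_Markov_inequality_measure[where A = "space M"]) auto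
    also have "\<dots> = real (k+1) * expectation (\<lambda>\<omega>. Rs (\<lambda>h. X h \<omega>) k (2^k)) / (q^2)^k"
      by simp
    also have "\<dots> \<le> real (k+1) * (real (k+1) * (1 / 2^k)) / (q^2)^k"
    proof -
      have "expectation (\<lambda>\<omega>. Rs (\<lambda>h. X h \<omega>) k (2^k)) \<le> real (k+1) * (1/2^k)"
        using RE V_dyad[of k] by (meson mult_left_mono of_nat_0_le_iff order_trans)
      then show ?thesis using q_bounds by (intro divide_right_mono mult_left_mono) auto
    qed
    also have "\<dots> = (real k + 1)^2 * r^k"
      unfolding r_def by (simp add: power2_eq_square power_divide power_mult_distrib field_simps)
    finally show ?thesis .
  qed
  have "summable (\<lambda>k. measure M (A k))"
    by (rule summable_comparison_test'[OF ratio_summable[OF r], of 0]) (use bound in auto)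
  then have "AE \<omega> in M. eventually (\<lambda>k. \<omega> \<in> space M - A k) sequentially"
    using meas by (intro borel_cantelli_AE1) (auto simp: emeasure_eq_measure)
  then show ?thesis
    by (rule AE_mp) (auto simp: A_def elim!: eventually_mono intro!: AE_I2)
qed

end

lemma ex_dyad: "1 \<le> (n::nat) \<Longrightarrow> \<exists>k. 2^k \<le> n \<and> n < 2^(Suc k)"
proof (induction n)
  case 0 then show ?case by simp
next
  case (Suc n)
  show ?case
  proof (cases "n = 0")
    case True then show ?thesis by (intro exI[of _ 0]) auto
  next
    case False
    then obtain k where k: "2^k \<le> n" "n < 2^Suc k" using Suc.IH by auto
    show ?thesis
    proof (cases "Suc n < 2^Suc k")
      case True then show ?thesis using k by (intro exI[of _ k]) auto
    next
      case False
      then have "Suc n = 2^Suc k" using k by auto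
      then show ?thesis by (intro exI[of _ "Suc k"]) auto
    qed
  qed
qed

lemma dyad_tele:
  fixes x :: "nat \<Rightarrow> real" and q :: real
  assumes q: "0 < q"
    and H: "\<And>k m. k \<ge> K \<Longrightarrow> m \<le> 2^k \<Longrightarrow> \<bar>Bs x (2^k) m\<bar> \<le> q^k"
  shows "k \<ge> K \<Longrightarrow> 2^k \<le> m \<Longrightarrow> m \<le> 2^(k+d) \<Longrightarrow> \<bar>\<Sum>h\<in>{2^k..<m}. x h\<bar> \<le> (\<Sum>i<d. q^(k+i))"
proof (induction d arbitrary: k m)
  case 0
  then have "m = 2^k" by simp
  then show ?case by simp
next
  case (Suc d)
  have nn: "0 \<le> (\<Sum>i<d. q^(k + Suc i))" using q by (auto intro: sum_nonneg)
  have sh: "(\<Sum>i<Suc d. q^(k+i)) = q^k + (\<Sum>i<d. q^(k + Suc i))"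
    by (subst sum.lessThan_Suc_shift) simp
  show ?case
  proof (cases "m \<le> 2^(k+1)")
    case True
    define m' where "m' = m - 2^k"
    have "m = 2^k + m'" "m' \<le> 2^k" using True Suc.prems by (auto simp: m'_def)
    then have "\<bar>\<Sum>h\<in>{2^k..<m}. x h\<bar> \<le> q^k" using H[OF Suc.prems(1), of m'] by (simp add: Bs_def)
    then show ?thesis using sh nn by linarith
  next
    case False
    have s: "(\<Sum>h\<in>{2^k..<m}. x h) = Bs x (2^k) (2^k) + (\<Sum>h\<in>{2^(k+1)..<m}. x h)"
      unfolding Bs_def using False
      by (subst sum.atLeastLessThan_concat[symmetric, of "2^k" "2^(k+1)"]) (auto simp: mult_2)
    have "\<bar>Bs x (2^k) (2^k)\<bar> \<le> q^k" using H[OF Suc.prems(1)] by simp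
    moreover have "\<bar>\<Sum>h\<in>{2^(k+1)..<m}. x h\<bar> \<le> (\<Sum>i<d. q^(k+1+i))"
      using Suc.IH[of "k+1" m] Suc.prems False by simp
    ultimately show ?thesis unfolding s sh by (simp add: abs_triangle_ineq[THEN order_trans])
  qed
qed

lemma dyad_bound:
  fixes x :: "nat \<Rightarrow> real" and q :: real
  assumes q: "0 < q" "q < 1"
    and H: "\<And>k m. k \<ge> K \<Longrightarrow> m \<le> 2^k \<Longrightarrow> \<bar>Bs x (2^k) m\<bar> \<le> q^k"
    and k: "k \<ge> K" "2^k \<le> m"
  shows "\<bar>\<Sum>h\<in>{2^k..<m}. x h\<bar> \<le> q^k / (1 - q)"
proof -
  have "m < 2^m" by (rule less_exp)
  then have "m \<le> 2^(k+m)" by (metis le_add2 less_imp_le_nat order_trans power_increasing_iff one_less_numeral_iff semiring_norm(76))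
  then have "\<bar>\<Sum>h\<in>{2^k..<m}. x h\<bar> \<le> (\<Sum>i<m. q^(k+i))" using dyad_tele[OF q(1) H k] by blast
  also have "\<dots> = q^k * (\<Sum>i<m. q^i)" by (simp add: power_add sum_distrib_left)
  also have "(\<Sum>i<m. q^i) = (1 - q^m) / (1 - q)" using q by (simp add: sum_gp_strict)
  also have "q^k * ((1 - q^m) / (1 - q)) \<le> q^k * (1 / (1 - q))"
    using q by (intro mult_left_mono divide_right_mono) auto
  finally show ?thesis by simp
qed

lemma dyad_final:
  fixes x :: "nat \<Rightarrow> real" and \<sigma> :: real
  assumes s: "0 < \<sigma>"
    and H: "\<And>k m. k \<ge> K \<Longrightarrow> m \<le> 2^k \<Longrightarrow> \<bar>Bs x (2^k) m\<bar> \<le> (2 powr (-\<sigma>))^k"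
    and n: "2^K \<le> n" and m: "n \<le> m"
  shows "\<bar>\<Sum>h\<in>{n..<m}. x h\<bar> \<le> 2 / ((1 - 2 powr (-\<sigma>)) * 2 powr (-\<sigma>)) * real n powr (-\<sigma>)"
proof -
  define q where "q = 2 powr (-\<sigma>)"
  have q: "0 < q" "q < 1" using s by (auto simp: q_def powr_less_one)
  have H': "\<And>k m. k \<ge> K \<Longrightarrow> m \<le> 2^k \<Longrightarrow> \<bar>Bs x (2^k) m\<bar> \<le> q^k" using H unfolding q_def .
  have "1 \<le> n" using n by (metis le_trans one_le_numeral one_le_power)
  then obtain k where k: "2^k \<le> n" "n < 2^Suc k" using ex_dyad by blast
  have kK: "K \<le> k"
  proof (rule ccontr)
    assume "\<not> K \<le> k"
    then have "Suc k \<le> K" by simp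
    then have "(2::nat)^Suc k \<le> 2^K" by (rule power_increasing) simp
    then show False using k n by simp
  qed
  have "(\<Sum>h\<in>{n..<m}. x h) = (\<Sum>h\<in>{2^k..<m}. x h) - (\<Sum>h\<in>{2^k..<n}. x h)"
    using k m by (subst sum.atLeastLessThan_concat[symmetric, of "2^k" n m]) auto
  then have "\<bar>\<Sum>h\<in>{n..<m}. x h\<bar> \<le> 2 * (q^k / (1 - q))"
    using dyad_bound[OF q H' kK, of m] dyad_bound[OF q H' kK, of n] k m by linarith
  moreover have "q^k = q^(Suc k) / q" using q by simp
  moreover have "q^(Suc k) \<le> real n powr (-\<sigma>)"
  proof -
    have "q^(Suc k) = (2 powr (real (Suc k))) powr (-\<sigma>)"
    proof -
      have "q^(Suc k) = q powr (real (Suc k))" using powr_realpow[OF q(1), of "Suc k"] by simp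
      also have "\<dots> = 2 powr (-\<sigma> * real (Suc k))" unfolding q_def powr_powr ..
      also have "\<dots> = (2 powr (real (Suc k))) powr (-\<sigma>)" unfolding powr_powr by (simp add: mult.commute)
      finally show ?thesis .
    qed
    also have "\<dots> = real (2^Suc k) powr (-\<sigma>)" using powr_realpow[of 2 "Suc k"] by simp
    also have "\<dots> \<le> real n powr (-\<sigma>)"
    proof -
      have "real n \<le> real ((2::nat)^Suc k)" using k(2) by (subst of_nat_le_iff) linarith
      moreover have "0 < real n" using \<open>1 \<le> n\<close> by simp
      ultimately show ?thesis using powr_mono2'[of "-\<sigma>" "real n" "real ((2::nat)^Suc k)"] s by linarith
    qed
    finally show ?thesis .
  qed
  ultimately have "\<bar>\<Sum>h\<in>{n..<m}. x h\<bar> \<le> 2 * (real n powr (-\<sigma>) / q / (1 - q))"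
    using q by (smt (verit, best) divide_right_mono)
  then show ?thesis using q unfolding q_def[symmetric] by (simp add: field_simps)
qed

lemma exp_dens_int: "0 < l \<Longrightarrow> has_bochner_integral lborel (\<lambda>x. exponential_density l x) 1"
proof -
  assume l: "0 < l"
  have "(\<integral>\<^sup>+ x. ennreal (exponential_density l x * x ^ 0) \<partial>lborel) = fact (0 + 0) / (fact 0 * l ^ 0)"
    by (rule nn_integral_erlang_ith_moment[OF l])
  then have "(\<integral>\<^sup>+ x. ennreal (exponential_density l x) \<partial>lborel) = ennreal 1" by simp
  then show ?thesis
    by (intro has_bochner_integral_nn_integral) (auto simp: exponential_density_nonneg[OF l])
qed

context cset begin

lemma Eexp: assumes h: "h \<ge> 1" and c: "c \<ge> 0"
  shows "integrable M (\<lambda>\<omega>. exp (- c * E h \<omega>)) \<and> expectation (\<lambda>\<omega>. exp (- c * E h \<omega>)) = 1 / (1 + c)"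
proof -
  have eq: "(\<lambda>x. exponential_density 1 x * exp (- c * x)) = (\<lambda>x. (1 / (1 + c)) * exponential_density (1 + c) x)"
  proof
    fix x
    have "1 + c > 0" using c by simp
    then show "exponential_density 1 x * exp (- c * x) = (1 / (1 + c)) * exponential_density (1 + c) x"
      by (auto simp: exponential_density_def exp_add[symmetric] field_simps)
  qed
  have hb: "has_bochner_integral lborel (\<lambda>x. exponential_density 1 x * exp (- c * x)) (1 / (1 + c))"
    unfolding eq using has_bochner_integral_mult_right[OF exp_dens_int[of "1+c"], of "1 / (1 + c)"] c by (simp only: mult_1_right)
  have D: "distributed M lborel (E h) (\<lambda>x. ennreal (exponential_density 1 x))" using distr[OF h] .
  have g: "(\<lambda>x. exp (- c * x)) \<in> borel_measurable lborel" by simp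
  have nn: "\<And>x. x \<in> space lborel \<Longrightarrow> 0 \<le> exponential_density 1 x" by (simp add: exponential_density_nonneg)
  have "integrable M (\<lambda>\<omega>. exp (- c * E h \<omega>))"
    using distributed_integrable[OF D g nn] hb by (auto simp: has_bochner_integral_iff)
  moreover have "expectation (\<lambda>\<omega>. exp (- c * E h \<omega>)) = 1 / (1 + c)"
    using distributed_integral[OF D g nn] hb by (auto simp: has_bochner_integral_iff)
  ultimately show ?thesis by blast
qed

definition mm :: "nat \<Rightarrow> nat \<Rightarrow> real" where
  "mm j k = exp (- (\<Sum>h=j..k. ln (1 + \<gamma> / real h)))"

lemma exp_S: assumes j: "1 \<le> j"
  shows "integral\<^sup>L M (\<lambda>\<eta>. exp (- \<gamma> * S_jk E j k \<eta>)) = mm j k"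
proof -
  let ?Y = "\<lambda>h \<omega>. exp (- (\<gamma> / real h) * E h \<omega>)"
  have eq: "(\<lambda>\<eta>. exp (- \<gamma> * S_jk E j k \<eta>)) = (\<lambda>\<eta>. \<Prod>h\<in>{j..k}. ?Y h \<eta>)"
    by (auto simp: fun_eq_iff S_jk_def sum_distrib_left exp_sum[symmetric] intro!: arg_cong[where f=exp] sum.cong)
  have ind0: "indep_vars (\<lambda>_. borel) (\<lambda>h \<omega>. (\<lambda>x. exp (- (\<gamma> / real h) * x)) (E h \<omega>)) {1..}"
    by (rule indep_vars_compose2[OF indep]) auto
  have ind: "indep_vars (\<lambda>_. borel) ?Y {j..k}"
    by (rule indep_vars_subset[OF ind0]) (use j in auto)
  have int: "\<And>h. h \<in> {j..k} \<Longrightarrow> integrable M (?Y h)"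
  proof -
    fix h assume "h \<in> {j..k}"
    then have "h \<ge> 1" "\<gamma> / real h \<ge> 0" using j gpos by auto
    then show "integrable M (?Y h)" using Eexp[of h "\<gamma> / real h"] by blast
  qed
  have "integral\<^sup>L M (\<lambda>\<eta>. exp (- \<gamma> * S_jk E j k \<eta>)) = (\<Prod>h\<in>{j..k}. expectation (?Y h))"
    unfolding eq by (rule indep_vars_lebesgue_integral[OF _ ind int]) auto
  also have "\<dots> = (\<Prod>h\<in>{j..k}. exp (- ln (1 + \<gamma> / real h)))"
  proof (rule prod.cong[OF refl])
    fix h assume h: "h \<in> {j..k}"
    then have "expectation (?Y h) = 1 / (1 + \<gamma> / real h)" using Eexp[of h "\<gamma> / real h"] gpos j by auto
    moreover have "1 + \<gamma> / real h > 0" using gpos by (simp add: add_pos_nonneg)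
    ultimately show "expectation (?Y h) = exp (- ln (1 + \<gamma> / real h))"
      by (simp add: exp_minus inverse_eq_divide)
  qed
  also have "\<dots> = mm j k" unfolding mm_def by (simp add: exp_sum[symmetric] sum_negf)
  finally show ?thesis .
qed

end

lemma aa_nonneg: "0 < \<tau> \<Longrightarrow> 0 \<le> f_tau \<tau> j - f_tau \<tau> (j - 1)"
  unfolding f_tau_def by (cases j) (auto intro!: powr_mono2)

lemma aa_le: assumes t: "0 < \<tau>" "\<tau> \<le> 1" and j: "1 \<le> j"
  shows "f_tau \<tau> j - f_tau \<tau> (j - 1) \<le> real j powr (\<tau> - 1)"
proof -
  have jr: "real j > 0" using j by simp
  define t where "t = real (j - 1) / real j"
  have t01: "0 \<le> t" "t \<le> 1" using j by (auto simp: t_def)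
  have "t \<le> t powr \<tau>"
    using powr_mono'[of \<tau> 1 t] t t01 by simp
  have rj: "real (j - 1) = t * real j" using jr by (simp add: t_def)
  have "f_tau \<tau> (j - 1) = t powr \<tau> * real j powr \<tau>"
    unfolding f_tau_def rj using t01 jr by (simp add: powr_mult)
  also have "\<dots> \<ge> t * real j powr \<tau>"
    using \<open>t \<le> t powr \<tau>\<close> by (intro mult_right_mono) auto
  finally have "f_tau \<tau> j - f_tau \<tau> (j - 1) \<le> (1 - t) * real j powr \<tau>"
    unfolding f_tau_def by (simp add: algebra_simps)
  also have "1 - t = 1 / real j" using j jr by (simp add: t_def field_simps of_nat_diff)
  also have "1 / real j * real j powr \<tau> = real j powr (\<tau> - 1)"
    using jr by (simp add: powr_diff)
  finally show ?thesis .
qed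

lemma ln_lower: "0 \<le> x \<Longrightarrow> x / (1 + x) \<le> ln (1 + (x::real))"
proof -
  assume x: "0 \<le> x"
  have p: "0 < 1 / (1 + x)" using x by simp
  have "ln (1 / (1 + x)) \<le> 1 / (1 + x) - 1" by (rule ln_le_minus_one[OF p])
  moreover have "ln (1 / (1 + x)) = - ln (1 + x)" using x by (simp add: ln_div)
  moreover have "1 / (1 + x) - 1 = - (x / (1 + x))" using x by (simp add: field_simps)
  ultimately show ?thesis by linarith
qed

lemma ln_diff_bound: "0 \<le> x \<Longrightarrow> \<bar>ln (1 + x) - x\<bar> \<le> (x::real)^2"
proof -
  assume x: "0 \<le> x"
  have u: "ln (1 + x) \<le> x" using x by (intro ln_add_one_self_le_self) 
  have "x / (1 + x) \<ge> x - x^2"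
  proof -
    have "(x - x^2) * (1 + x) = x - x^3" by (simp add: algebra_simps power2_eq_square power3_eq_cube)
    also have "\<dots> \<le> x" using x by simp
    finally show ?thesis using x by (simp add: field_simps)
  qed
  then show ?thesis using ln_lower[OF x] u by linarith
qed

lemma inv_sq_sum: "1 \<le> a \<Longrightarrow> (\<Sum>h\<in>{a..<a+n}. 1 / (real h)^2) \<le> 2 / real a - 2 / real (a + n)"
proof (induction n)
  case 0 then show ?case by simp
next
  case (Suc n)
  have p: "real (a + n) \<ge> 1" using Suc.prems by simp
  have "1 / (real (a + n))^2 \<le> 2 / real (a + n) - 2 / real (a + Suc n)"
  proof -
    have "2 / real (a + n) - 2 / real (a + Suc n) = 2 / (real (a+n) * (real (a+n) + 1))"
      using p by (simp add: field_simps)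
    also have "\<dots> \<ge> 1 / (real (a + n))^2"
    proof -
      define y where "y = real (a + n)"
      have y: "1 \<le> y" using p by (simp add: y_def)
      have "y * (y + 1) \<le> y * (2 * y)" using y by (intro mult_left_mono) auto
      then have "1 / (y * (2 * y)) \<le> 1 / (y * (y + 1))" using y
        by (intro divide_left_mono mult_pos_pos) auto
      then show ?thesis unfolding y_def[symmetric] using y by (simp add: power2_eq_square field_simps)
    qed
    finally show ?thesis .
  qed
  then show ?case using Suc by simp
qed

lemma inv_sq_sum': "1 \<le> a \<Longrightarrow> (\<Sum>h\<in>{a..<a+n}. 1 / (real h)^2) \<le> 2 / real a"
  using inv_sq_sum[of a n] by (smt (verit) divide_nonneg_nonneg of_nat_0_le_iff)

lemma abs_exp_m1: "\<bar>exp y - 1\<bar> \<le> exp \<bar>y\<bar> - (1::real)"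
proof (cases "y \<ge> 0")
  case True then show ?thesis by simp
next
  case False
  have "1 - exp y \<le> - y" using exp_ge_add_one_self[of y] by linarith
  moreover have "- y \<le> exp (- y) - 1" using exp_ge_add_one_self[of "-y"] by linarith
  moreover have "exp y \<le> 1" using False by simp
  ultimately show ?thesis using False by simp
qed

lemma exp_m1_le: "0 \<le> x \<Longrightarrow> exp x - 1 \<le> x * exp (x::real)"
proof -
  assume x: "0 \<le> x"
  have "1 - x \<le> exp (- x)" using exp_ge_add_one_self[of "-x"] by linarith
  then have "(1 - x) * exp x \<le> exp (-x) * exp x" by (intro mult_right_mono) auto
  then show ?thesis by (simp add: exp_minus algebra_simps)
qed

lemma mm_tendsto: assumes g: "0 < g" and j: "1 \<le> j"
  shows "(\<lambda>k. exp (- (\<Sum>h=j..k. ln (1 + g / real h)))) \<longlonglongrightarrow> 0"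
proof -
  define c where "c = g / (1 + g)"
  have c: "0 < c" using g by (simp add: c_def)
  have low: "c * (ln (real (Suc k)) - ln (real j)) \<le> (\<Sum>h=j..k. ln (1 + g / real h))" if k: "j \<le> k" for k
  proof -
    have "c * (ln (real (Suc k)) - ln (real j)) = c * (\<Sum>h=j..k. ln (real (Suc h)) - ln (real h))"
      using k by (subst sum_Suc_diff) auto
    also have "\<dots> = (\<Sum>h=j..k. c * (ln (real (Suc h)) - ln (real h)))" by (simp add: sum_distrib_left)
    also have "\<dots> \<le> (\<Sum>h=j..k. ln (1 + g / real h))"
    proof (rule sum_mono)
      fix h assume "h \<in> {j..k}"
      then have h: "real h \<ge> 1" using j by auto
      have "1 + 1 / real h = real (Suc h) / real h" using h by (simp add: field_simps)
      then have "ln (real (Suc h)) - ln (real h) = ln (1 + 1 / real h)"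
        using h by (simp add: ln_div)
      also have "\<dots> \<le> 1 / real h" using h by (intro ln_add_one_self_le_self) auto
      finally have a: "ln (real (Suc h)) - ln (real h) \<le> 1 / real h" .
      have "c * (1 / real h) \<le> (g / real h) / (1 + g / real h)"
      proof -
        have e1: "c * (1 / real h) = g / ((1 + g) * real h)" unfolding c_def by simp
        have e2: "(g / real h) / (1 + g / real h) = g / (real h + g)" using h by (simp add: field_simps)
        have "real h + g \<le> (1 + g) * real h" using h g by (simp add: algebra_simps)
        then have "g / ((1 + g) * real h) \<le> g / (real h + g)" using h g
          by (intro divide_left_mono) auto
        then show ?thesis unfolding e1 e2 .
      qed
      also have "\<dots> \<le> ln (1 + g / real h)" using g h by (intro ln_lower) auto
      finally show "c * (ln (real (Suc h)) - ln (real h)) \<le> ln (1 + g / real h)"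
        using a c by (smt (verit) mult_left_mono)
    qed
    finally show ?thesis .
  qed
  have lim1: "filterlim (\<lambda>k. c * (ln (real (Suc k)) - ln (real j))) at_top sequentially"
  proof -
    have "filterlim (\<lambda>k. real (Suc k)) at_top sequentially"
      by (rule filterlim_compose[OF filterlim_real_sequentially filterlim_Suc])
    then have "filterlim (\<lambda>k. ln (real (Suc k))) at_top sequentially"
      by (rule filterlim_compose[OF ln_at_top])
    then have "filterlim (\<lambda>k. (- ln (real j)) + ln (real (Suc k))) at_top sequentially"
      by (rule filterlim_tendsto_add_at_top[OF tendsto_const])
    then have "filterlim (\<lambda>k. c * ((- ln (real j)) + ln (real (Suc k)))) at_top sequentially"
      by (rule filterlim_tendsto_pos_mult_at_top[OF tendsto_const c])
    then show ?thesis by simp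
  qed
  have lim2: "(\<lambda>k. exp (- (c * (ln (real (Suc k)) - ln (real j))))) \<longlonglongrightarrow> 0"
    using filterlim_compose[OF exp_at_bot filterlim_compose[OF filterlim_uminus_at_bot_at_top lim1]]
    by simp
  show ?thesis
  proof (rule Lim_null_comparison[OF _ lim2])
    show "\<forall>\<^sub>F k in sequentially. norm (exp (- (\<Sum>h=j..k. ln (1 + g / real h)))) \<le> exp (- (c * (ln (real (Suc k)) - ln (real j))))"
      using eventually_ge_at_top[of j] by eventually_elim (use low in auto)
  qed
qed

lemma mm_bounds: "0 < g \<Longrightarrow> 0 \<le> exp (- (\<Sum>h=j..k. ln (1 + g / real h))) \<and> exp (- (\<Sum>h=j..k. ln (1 + g / real h))) \<le> 1"
  by (auto intro!: sum_nonneg)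

context cset begin

definition aa :: "nat \<Rightarrow> real" where "aa j = f_tau \<tau> j - f_tau \<tau> (j - 1)"
definition dd :: "nat \<Rightarrow> real" where "dd h = ln (1 + \<gamma> / real h) - \<gamma> / real h"
definition GG :: "'a \<Rightarrow> nat \<Rightarrow> nat \<Rightarrow> real" where
  "GG \<omega> j k = - \<gamma> * (\<Sum>h\<in>{j..<Suc k}. X h \<omega>) + (\<Sum>h=j..k. dd h)"

lemma W_repr: "W_k M E \<gamma> \<tau> k \<omega> = (\<Sum>j=1..k. aa j * mm j k * (exp (GG \<omega> j k) - 1))"
proof -
  have "exp (- \<gamma> * S_jk E j k \<omega>) - integral\<^sup>L M (\<lambda>\<eta>. exp (- \<gamma> * S_jk E j k \<eta>)) = mm j k * (exp (GG \<omega> j k) - 1)"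
    if j: "j \<in> {1..k}" for j
  proof -
    have "- \<gamma> * S_jk E j k \<omega> = (\<Sum>h=j..k. - \<gamma> * X h \<omega> + dd h - ln (1 + \<gamma> / real h))"
      unfolding S_jk_def sum_distrib_left
    proof (intro sum.cong refl)
      fix h
      show "- \<gamma> * (E h \<omega> / real h) = - \<gamma> * X h \<omega> + dd h - ln (1 + \<gamma> / real h)"
        by (cases "h = 0") (simp_all add: X_def dd_def field_simps)
    qed
    also have "\<dots> = - (\<Sum>h=j..k. ln (1 + \<gamma> / real h)) + GG \<omega> j k"
      unfolding GG_def atLeastLessThanSuc_atLeastAtMost
      by (simp add: sum.distrib sum_subtractf sum_distrib_left sum_negf)
    finally have "exp (- \<gamma> * S_jk E j k \<omega>) = mm j k * exp (GG \<omega> j k)"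
      unfolding mm_def by (simp add: exp_add[symmetric] exp_diff)
    then show ?thesis using exp_S[of j k] j by (simp add: algebra_simps)
  qed
  then show ?thesis unfolding W_k_def aa_def
    by (intro sum.cong refl) (simp add: mult.assoc)
qed

lemma path_bound:
  assumes ev: "eventually (\<lambda>k. real (k+1) * Rs (\<lambda>h. X h \<omega>) k (2^k) < (q^2)^k) sequentially"
  shows "\<exists>K. \<forall>n m. 2^K \<le> n \<longrightarrow> n \<le> m \<longrightarrow>
    \<bar>\<Sum>h\<in>{n..<m}. X h \<omega>\<bar> \<le> 2 / ((1 - q) * q) * real n powr (-\<sigma>)"
proof -
  obtain K where K: "\<And>k. k \<ge> K \<Longrightarrow> real (k+1) * Rs (\<lambda>h. X h \<omega>) k (2^k) < (q^2)^k"
    using ev unfolding eventually_sequentially by blast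
  have H: "\<bar>Bs (\<lambda>h. X h \<omega>) (2^k) m\<bar> \<le> (2 powr (-\<sigma>))^k" if "k \<ge> K" "m \<le> 2^k" for k m
  proof -
    have "(Bs (\<lambda>h. X h \<omega>) (2^k) m)^2 \<le> real (k+1) * Rs (\<lambda>h. X h \<omega>) k (2^k)"
      using chain_path[OF that(2)] by simp
    also have "\<dots> < (q^k)^2" using K[OF that(1)] by (simp add: power_mult[symmetric] mult.commute)
    finally have lt: "(Bs (\<lambda>h. X h \<omega>) (2^k) m)^2 < (q^k)^2" .
    have "\<bar>Bs (\<lambda>h. X h \<omega>) (2^k) m\<bar> < q^k"
    proof -
      have "0 \<le> q^k" using q_bounds by simp
      moreover have "\<bar>Bs (\<lambda>h. X h \<omega>) (2^k) m\<bar>^2 < (q^k)^2" using lt by simp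
      ultimately show ?thesis using power_less_imp_less_base by blast
    qed
    then show ?thesis unfolding q_def by simp
  qed
  show ?thesis
    using dyad_final[OF \<sigma>_bounds(3) H] unfolding q_def[symmetric] by blast
qed


lemma conv_path:
  assumes PB: "\<And>n m. 2^K \<le> n \<Longrightarrow> n \<le> m \<Longrightarrow>
    \<bar>\<Sum>h\<in>{n..<m}. X h \<omega>\<bar> \<le> 2 / ((1 - q) * q) * real n powr (-\<sigma>)"
  shows "(\<lambda>k. W_k M E \<gamma> \<tau> k \<omega>) \<longlonglongrightarrow> 0"
proof -
  define Cq where "Cq = 2 / ((1 - q) * q)"
  have Cq: "0 < Cq" using q_bounds by (simp add: Cq_def)
  define N :: nat where "N = 2^K"
  have N1: "1 \<le> N" by (simp add: N_def)
  define Bd where "Bd = (\<Sum>h\<in>{1..<N}. \<bar>X h \<omega>\<bar>) + Cq * real N powr (-\<sigma>)"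
  have Bd0: "0 \<le> Bd" using Cq by (auto simp: Bd_def intro!: add_nonneg_nonneg sum_nonneg)
  define bX where "bX j = (if N \<le> j then Cq * real j powr (-\<sigma>) else Bd)" for j :: nat
  have bX0: "0 \<le> bX j" for j using Cq Bd0 by (simp add: bX_def)
  have Xb: "\<bar>\<Sum>h\<in>{j..<m}. X h \<omega>\<bar> \<le> bX j" if j: "1 \<le> j" "j \<le> m" for j m
  proof (cases "N \<le> j")
    case True
    then show ?thesis using PB[of j m] j unfolding bX_def Cq_def N_def by simp
  next
    case False
    have sub: "\<bar>\<Sum>h\<in>A. X h \<omega>\<bar> \<le> (\<Sum>h\<in>{1..<N}. \<bar>X h \<omega>\<bar>)" if "A \<subseteq> {1..<N}" for A
    proof -
      have "\<bar>\<Sum>h\<in>A. X h \<omega>\<bar> \<le> (\<Sum>h\<in>A. \<bar>X h \<omega>\<bar>)" by (rule sum_abs)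
      also have "\<dots> \<le> (\<Sum>h\<in>{1..<N}. \<bar>X h \<omega>\<bar>)" using that by (intro sum_mono2) auto
      finally show ?thesis .
    qed
    have CN: "0 \<le> Cq * real N powr (-\<sigma>)" using Cq by simp
    show ?thesis
    proof (cases "m \<le> N")
      case True
      then have "\<bar>\<Sum>h\<in>{j..<m}. X h \<omega>\<bar> \<le> (\<Sum>h\<in>{1..<N}. \<bar>X h \<omega>\<bar>)" using j by (intro sub) auto
      then show ?thesis using False CN unfolding bX_def Bd_def by simp
    next
      case mN: False
      have split: "(\<Sum>h\<in>{j..<m}. X h \<omega>) = (\<Sum>h\<in>{j..<N}. X h \<omega>) + (\<Sum>h\<in>{N..<m}. X h \<omega>)"
        using False mN by (intro sum.atLeastLessThan_concat[symmetric]) auto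
      have "\<bar>\<Sum>h\<in>{j..<N}. X h \<omega>\<bar> \<le> (\<Sum>h\<in>{1..<N}. \<bar>X h \<omega>\<bar>)" using j by (intro sub) auto
      moreover have "\<bar>\<Sum>h\<in>{N..<m}. X h \<omega>\<bar> \<le> Cq * real N powr (-\<sigma>)"
        using PB[of N m] mN unfolding Cq_def N_def by simp
      moreover have "bX j = Bd" using False by (simp add: bX_def)
      ultimately show ?thesis unfolding split Bd_def
        using abs_triangle_ineq[of "\<Sum>h\<in>{j..<N}. X h \<omega>" "\<Sum>h\<in>{N..<m}. X h \<omega>"] by linarith
    qed
  qed
  define D where "D j = \<gamma> * bX j + 2 * \<gamma>^2 / real j" for j :: nat
  have D0: "0 \<le> D j" for j using gpos bX0[of j] by (simp add: D_def)
  have GGb: "\<bar>GG \<omega> j k\<bar> \<le> D j" if j: "1 \<le> j" "j \<le> k" for j k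
  proof -
    have "\<bar>\<Sum>h=j..k. dd h\<bar> \<le> (\<Sum>h=j..k. \<bar>dd h\<bar>)" by (rule sum_abs)
    also have "\<dots> \<le> (\<Sum>h=j..k. \<gamma>^2 * (1 / (real h)^2))"
    proof (rule sum_mono)
      fix h assume "h \<in> {j..k}"
      have "\<bar>dd h\<bar> \<le> (\<gamma> / real h)^2" unfolding dd_def using gpos by (intro ln_diff_bound) auto
      then show "\<bar>dd h\<bar> \<le> \<gamma>^2 * (1 / (real h)^2)" by (simp add: power_divide)
    qed
    also have "\<dots> = \<gamma>^2 * (\<Sum>h\<in>{j..<j + (Suc k - j)}. 1 / (real h)^2)"
      using j by (simp add: sum_distrib_left atLeastLessThanSuc_atLeastAtMost)
    also have "\<dots> \<le> \<gamma>^2 * (2 / real j)" using inv_sq_sum'[OF j(1)] by (intro mult_left_mono) auto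
    finally have d: "\<bar>\<Sum>h=j..k. dd h\<bar> \<le> 2 * \<gamma>^2 / real j" by (simp add: mult.commute)
    have x: "\<bar>\<Sum>h\<in>{j..<Suc k}. X h \<omega>\<bar> \<le> bX j" using Xb[of j "Suc k"] j by simp
    have "\<bar>GG \<omega> j k\<bar> \<le> \<gamma> * \<bar>\<Sum>h\<in>{j..<Suc k}. X h \<omega>\<bar> + \<bar>\<Sum>h=j..k. dd h\<bar>"
      unfolding GG_def using gpos abs_triangle_ineq[of "- \<gamma> * (\<Sum>h\<in>{j..<Suc k}. X h \<omega>)" "\<Sum>h=j..k. dd h"]
      by (simp only: abs_mult abs_minus_cancel mult_minus_left)
    also have "\<dots> \<le> \<gamma> * bX j + 2 * \<gamma>^2 / real j" using x d gpos by (intro add_mono mult_left_mono) auto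
    finally show ?thesis unfolding D_def .
  qed
  define T where "T j k = (if 1 \<le> j \<and> j \<le> k then aa j * mm j k * (exp (GG \<omega> j k) - 1) else 0)" for j k
  define Mb where "Mb j = aa j * (exp (D j) - 1)" for j
  have aa0: "0 \<le> aa j" for j unfolding aa_def using aa_nonneg tpos by blast
  have mm01: "0 \<le> mm j k" "mm j k \<le> 1" for j k unfolding mm_def using mm_bounds[OF gpos] by auto
  have Tb: "\<bar>T j k\<bar> \<le> aa j * mm j k * (exp (D j) - 1)" for j k
  proof (cases "1 \<le> j \<and> j \<le> k")
    case True
    have "\<bar>exp (GG \<omega> j k) - 1\<bar> \<le> exp (D j) - 1"
      using abs_exp_m1[of "GG \<omega> j k"] GGb[of j k] True by (smt (verit) exp_le_cancel_iff)
    then show ?thesis using True aa0[of j] mm01[of j k] unfolding T_def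
      by (simp add: abs_mult mult.assoc mult_left_mono)
  next
    case False
    then have "T j k = 0" unfolding T_def by auto
    moreover have "0 \<le> aa j * mm j k * (exp (D j) - 1)"
      using aa0[of j] mm01[of j k] D0[of j] by (intro mult_nonneg_nonneg) auto
    ultimately show ?thesis by simp
  qed
  have TMb: "\<bar>T j k\<bar> \<le> Mb j" for j k
  proof -
    have "aa j * mm j k * (exp (D j) - 1) \<le> aa j * 1 * (exp (D j) - 1)"
      using aa0[of j] mm01[of j k] D0[of j] by (intro mult_right_mono mult_left_mono) auto
    then show ?thesis using Tb[of j k] unfolding Mb_def by simp
  qed
  have Tlim: "(\<lambda>k. T j k) \<longlonglongrightarrow> 0" for j
  proof (cases "1 \<le> j")
    case False
    then show ?thesis unfolding T_def by simp
  next
    case True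
    have "(\<lambda>k. aa j * (exp (D j) - 1) * mm j k) \<longlonglongrightarrow> aa j * (exp (D j) - 1) * 0"
      using mm_tendsto[OF gpos True] unfolding mm_def[symmetric] by (intro tendsto_mult tendsto_const)
    then have l: "(\<lambda>k. aa j * (exp (D j) - 1) * mm j k) \<longlonglongrightarrow> 0" by simp
    show ?thesis
      by (rule Lim_null_comparison[OF _ l]) (use Tb in \<open>auto simp: mult_ac\<close>)
  qed
  have sumMb: "summable Mb"
  proof -
    define c0 where "c0 = \<gamma> * Cq + 2 * \<gamma>^2"
    have c0: "0 \<le> c0" using gpos Cq by (simp add: c0_def)
    have "summable (\<lambda>j. c0 * exp c0 * real j powr (\<tau> - 1 - \<sigma>))"
      using \<sigma>_bounds by (intro summable_mult) (simp add: summable_real_powr_iff)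
    moreover have "norm (Mb j) \<le> c0 * exp c0 * real j powr (\<tau> - 1 - \<sigma>)" if j: "j \<ge> N" for j
    proof -
      have j1: "1 \<le> j" using j N1 by simp
      have jr: "1 \<le> real j" using j1 by simp
      have ps: "real j powr (-\<sigma>) \<le> 1" using jr \<sigma>_bounds powr_mono[of "-\<sigma>" 0 "real j"] by simp
      have inv: "1 / real j \<le> real j powr (-\<sigma>)"
      proof -
        have "real j powr (-1) \<le> real j powr (-\<sigma>)" using jr \<sigma>_bounds by (intro powr_mono) auto
        then show ?thesis using jr by (simp add: powr_minus_divide)
      qed
      have Dj: "D j \<le> c0 * real j powr (-\<sigma>)"
      proof -
        have "D j = \<gamma> * Cq * real j powr (-\<sigma>) + 2 * \<gamma>^2 * (1 / real j)"
          using j unfolding D_def bX_def by simp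
        also have "\<dots> \<le> \<gamma> * Cq * real j powr (-\<sigma>) + 2 * \<gamma>^2 * real j powr (-\<sigma>)"
          using inv gpos by (intro add_left_mono mult_left_mono) auto
        finally show ?thesis by (simp add: c0_def algebra_simps)
      qed
      have Dc: "D j \<le> c0" using Dj ps c0 by (meson mult_left_le order_trans)
      have "exp (D j) - 1 \<le> D j * exp (D j)" by (rule exp_m1_le[OF D0])
      also have "\<dots> \<le> (c0 * real j powr (-\<sigma>)) * exp c0"
        using Dj Dc D0[of j] by (intro mult_mono) auto
      finally have e: "exp (D j) - 1 \<le> c0 * exp c0 * real j powr (-\<sigma>)" by (simp add: mult_ac)
      have a: "aa j \<le> real j powr (\<tau> - 1)" unfolding aa_def using aa_le[OF tpos _ j1] thalf by simp
      have "norm (Mb j) = aa j * (exp (D j) - 1)"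
        unfolding Mb_def using aa0[of j] D0[of j] by simp
      also have "\<dots> \<le> real j powr (\<tau> - 1) * (c0 * exp c0 * real j powr (-\<sigma>))"
        using a e aa0[of j] D0[of j] by (intro mult_mono) auto
      also have "\<dots> = c0 * exp c0 * (real j powr (\<tau> - 1) * real j powr (-\<sigma>))" by (simp add: mult_ac)
      also have "real j powr (\<tau> - 1) * real j powr (-\<sigma>) = real j powr (\<tau> - 1 - \<sigma>)"
        using jr by (simp add: powr_add[symmetric])
      finally show ?thesis .
    qed
    ultimately show ?thesis by (rule summable_comparison_test') 
  qed
  have tan: "(\<lambda>k. suminf (\<lambda>j. T j k)) \<longlonglongrightarrow> suminf (\<lambda>j. (0::real))"
    using tannerys_theorem[where a = T and b = "\<lambda>_. 0" and M = Mb and F = sequentially, OF Tlim _ sumMb]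
    using TMb by (auto intro!: always_eventually)
  have "suminf (\<lambda>j. T j k) = W_k M E \<gamma> \<tau> k \<omega>" for k
  proof -
    have "suminf (\<lambda>j. T j k) = sum (\<lambda>j. T j k) {1..k}"
      by (rule suminf_finite) (auto simp: T_def)
    also have "\<dots> = W_k M E \<gamma> \<tau> k \<omega>" unfolding W_repr T_def by (intro sum.cong) auto
    finally show ?thesis .
  qed
  then show ?thesis using tan by simp
qed
end

lemma (in cset) main: "AE \<omega> in M. (\<lambda>k. W_k M E \<gamma> \<tau> k \<omega>) \<longlonglongrightarrow> 0"
proof (rule AE_mp[OF BC], rule AE_I2, rule impI)
  fix \<omega> assume ev: "eventually (\<lambda>k. real (k+1) * Rs (\<lambda>h. X h \<omega>) k (2^k) < (q^2)^k) sequentially"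
  obtain K where K: "\<forall>n m. 2^K \<le> n \<longrightarrow> n \<le> m \<longrightarrow>
    \<bar>\<Sum>h\<in>{n..<m}. X h \<omega>\<bar> \<le> 2 / ((1 - q) * q) * real n powr (-\<sigma>)"
    using path_bound[OF ev] by (elim exE)
  have K': "\<And>n m. 2^K \<le> n \<Longrightarrow> n \<le> m \<Longrightarrow>
    \<bar>\<Sum>h\<in>{n..<m}. X h \<omega>\<bar> \<le> 2 / ((1 - q) * q) * real n powr (-\<sigma>)"
    using K by simp
  show "(\<lambda>k. W_k M E \<gamma> \<tau> k \<omega>) \<longlonglongrightarrow> 0"
    by (rule conv_path[OF K'])
qed

theorem corollary1:
  fixes M :: "'a measure" and E :: "nat \<Rightarrow> 'a \<Rightarrow> real" and \<gamma> \<tau> :: real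
  assumes "prob_space M"
    and "\<gamma> > 0"
    and "0 < \<tau>" and "\<tau> < 1/2"
    and "\<And>h. h \<ge> 1 \<Longrightarrow> distributed M lborel (E h) (\<lambda>x. ennreal (exponential_density 1 x))"
    and "prob_space.indep_vars M (\<lambda>_. borel) E {1..}"
  shows "\<exists>Winf \<in> borel_measurable M.
           AE \<omega> in M. (\<lambda>k. W_k M E \<gamma> \<tau> k \<omega>) \<longlonglongrightarrow> Winf \<omega>"
proof -
  have c: "cset M E \<gamma> \<tau>"
  proof (rule cset.intro[OF assms(1)], rule cset_axioms.intro)
    show "0 < \<gamma>" "0 < \<tau>" "\<tau> < 1/2" using assms(2-4) .
    show "\<And>h. h \<ge> 1 \<Longrightarrow> distributed M lborel (E h) (\<lambda>x. ennreal (exponential_density 1 x))" using assms(5) .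
    show "prob_space.indep_vars M (\<lambda>_. borel) E {1..}" using assms(6) .
  qed
  interpret cset M E \<gamma> \<tau> by (rule c)
  have m: "(\<lambda>_. 0::real) \<in> borel_measurable M" by simp
  have a: "AE \<omega> in M. (\<lambda>k. W_k M E \<gamma> \<tau> k \<omega>) \<longlonglongrightarrow> (\<lambda>_. 0::real) \<omega>" using main by simp
  show ?thesis
  proof (rule bexI[where x="\<lambda>_. 0::real"])
    show "AE \<omega> in M. (\<lambda>k. W_k M E \<gamma> \<tau> k \<omega>) \<longlonglongrightarrow> (\<lambda>_. 0::real) \<omega>" by (rule a)
  qed (rule m)
qed

end
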